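(* Let $\mathbf{t}:\mathcal{D}\to\mathcal{T}$ be a closed monoidal refinement system. Then, whenever the pullbacks and pushforwards involved exist, there are vertical isomorphisms: (a) for $c:A\to A'$, $d:B\to B'$, $P\sqsubset A$, $Q\sqsubset B$: $(c\otimes d)_!(P\otimes Q)\cong c_!P\otimes d_!Q$; (b) for $c:A\to A'$, $d:C'\to C$, $P\sqsubset A$, $R\sqsubset C$: $(c_!P)\backslash(d^*R)\cong (c\backslash d)^*(P\backslash R)$, where $c\backslash d:A'\backslash C'\to A\backslash C$ is the action of the left residual functor $\backslash:\mathcal T^{op}\times\mathcal T\to\mathcal T$; (c) for $c:B\to B'$, $d:C'\to C$, $Q\sqsubset B$, $R\sqsubset C$: $(d^*R)/(c_!Q)\cong (d/c)^*(R/Q)$, where $d/c:C'/B'\to C/B$ is the action of the right residual functor $/:\mathcal T\times\mathcal T^{op}\to\mathcal T$.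
   Context: A refinement system is a functor $\mathbf{t}:\mathcal{D}\to\mathcal{T}$; composition is written diagrammatically ($c;d$ = first $c$ then $d$). Write $P\sqsubset A$ if $\mathbf t(P)=A$; a derivation of $P\Rightarrow_c Q$ ($c:A\to B$, $P\sqsubset A$, $Q\sqsubset B$) is a morphism $\alpha:P\to Q$ with $\mathbf t(\alpha)=c$. Refinements $P,Q\sqsubset A$ are vertically isomorphic ($P\cong Q$) if there is an isomorphism $P\to Q$ mapped to $\mathrm{id}_A$. A pullback of $Q\sqsubset B$ along $c:A\to B$ is $c^*Q\sqsubset A$ with a derivation $\lambda$ of $c^*Q\Rightarrow_cQ$ such that for all $P\sqsubset X$, $d:X\to A$, post-composition with $\lambda$ is a bijection from derivations of $P\Rightarrow_d c^*Q$ to derivations of $P\Rightarrow_{d;c}Q$. A pushforward of $P\sqsubset A$ along $c:A\to B$ is $c_!P\sqsubset B$ with a derivation $\kappa$ of $P\Rightarrow_c c_!P$ such that for all $Q\sqsubset Y$, $d:B\to Y$, pre-composition with $\kappa$ is a bijection from derivations of $c_!P\Rightarrow_dQ$ to derivations of $P\Rightarrow_{c;d}Q$. A monoidal category is closed if it has a left residual $X\backslash Z$ and right residual $Z/Y$ with natural bijections $\mathcal C(Y,X\backslash Z)\cong\mathcal C(X\otimes Y,Z)\cong\mathcal C(X,Z/Y)$. A closed monoidal refinement system is a functor $\mathbf t:\mathcal D\to\mathcal T$ between closed monoidal categories which strictly preserves tensor products, unit, and both residuals (together with their structure maps), so that $P\otimes Q\sqsubset A\otimes B$, $P\backslash R\sqsubset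 A\backslash C$, $R/Q\sqsubset C/B$ whenever $P\sqsubset A$, $Q\sqsubset B$, $R\sqsubset C$. *)

theory Defs
  imports Main
begin

record ('o, 'm) cat =
  Obj :: "'o set"
  Hom :: "'o \<Rightarrow> 'o \<Rightarrow> 'm set"
  cmp :: "'m \<Rightarrow> 'm \<Rightarrow> 'm"   (* cmp f g = f ; g  (first f, then g) *)
  idm :: "'o \<Rightarrow> 'm"

definition category :: "('o, 'm, 'z) cat_scheme \<Rightarrow> bool" where
  "category C \<longleftrightarrow>
     (\<forall>A B f. f \<in> Hom C A B \<longrightarrow> A \<in> Obj C \<and> B \<in> Obj C) \<and>
     (\<forall>A B A' B' f. f \<in> Hom C A B \<longrightarrow> f \<in> Hom C A' B' \<longrightarrow> A = A' \<and> B = B') \<and>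
     (\<forall>A \<in> Obj C. idm C A \<in> Hom C A A) \<and>
     (\<forall>A B E f g. f \<in> Hom C A B \<longrightarrow> g \<in> Hom C B E \<longrightarrow> cmp C f g \<in> Hom C A E) \<and>
     (\<forall>A B f. f \<in> Hom C A B \<longrightarrow> cmp C (idm C A) f = f \<and> cmp C f (idm C B) = f) \<and>
     (\<forall>A B E F f g h. f \<in> Hom C A B \<longrightarrow> g \<in> Hom C B E \<longrightarrow> h \<in> Hom C E F \<longrightarrow>
        cmp C (cmp C f g) h = cmp C f (cmp C g h))"

definition is_iso :: "('o, 'm, 'z) cat_scheme \<Rightarrow> 'o \<Rightarrow> 'o \<Rightarrow> 'm \<Rightarrow> bool" where
  "is_iso C A B f \<longleftrightarrow> f \<in> Hom C A B \<and>
     (\<exists>g \<in> Hom C B A. cmp C f g = idm C A \<and> cmp C g f = idm C B)"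

definition is_functor ::
  "('o1, 'm1, 'z1) cat_scheme \<Rightarrow> ('o2, 'm2, 'z2) cat_scheme \<Rightarrow> ('o1 \<Rightarrow> 'o2) \<Rightarrow> ('m1 \<Rightarrow> 'm2) \<Rightarrow> bool" where
  "is_functor C D Fo Fm \<longleftrightarrow>
     (\<forall>A \<in> Obj C. Fo A \<in> Obj D) \<and>
     (\<forall>A B f. f \<in> Hom C A B \<longrightarrow> Fm f \<in> Hom D (Fo A) (Fo B)) \<and>
     (\<forall>A \<in> Obj C. Fm (idm C A) = idm D (Fo A)) \<and>
     (\<forall>A B E f g. f \<in> Hom C A B \<longrightarrow> g \<in> Hom C B E \<longrightarrow> Fm (cmp C f g) = cmp D (Fm f) (Fm g))"

record ('o, 'm) mcat = "('o, 'm) cat" +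
  tens_o :: "'o \<Rightarrow> 'o \<Rightarrow> 'o"
  tens_m :: "'m \<Rightarrow> 'm \<Rightarrow> 'm"
  unit_o :: "'o"
  asc :: "'o \<Rightarrow> 'o \<Rightarrow> 'o \<Rightarrow> 'm"
  lu :: "'o \<Rightarrow> 'm"
  ru :: "'o \<Rightarrow> 'm"
  ldiv :: "'o \<Rightarrow> 'o \<Rightarrow> 'o"              (* ldiv X Z = X \ Z *)
  evL :: "'o \<Rightarrow> 'o \<Rightarrow> 'm"
  rdiv :: "'o \<Rightarrow> 'o \<Rightarrow> 'o"              (* rdiv Z Y = Z / Y *)
  evR :: "'o \<Rightarrow> 'o \<Rightarrow> 'm"

definition monoidal :: "('o, 'm, 'z) mcat_scheme \<Rightarrow> bool" where
  "monoidal C \<longleftrightarrow> category C \<and>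
     unit_o C \<in> Obj C \<and>
     (\<forall>A \<in> Obj C. \<forall>B \<in> Obj C. tens_o C A B \<in> Obj C) \<and>
     (\<forall>A B A' B' f g. f \<in> Hom C A B \<longrightarrow> g \<in> Hom C A' B' \<longrightarrow>
        tens_m C f g \<in> Hom C (tens_o C A A') (tens_o C B B')) \<and>
     (\<forall>A \<in> Obj C. \<forall>B \<in> Obj C. tens_m C (idm C A) (idm C B) = idm C (tens_o C A B)) \<and>
     (\<forall>A B E A' B' E' f g f' g'. f \<in> Hom C A B \<longrightarrow> g \<in> Hom C B E \<longrightarrow>
        f' \<in> Hom C A' B' \<longrightarrow> g' \<in> Hom C B' E' \<longrightarrow>
        tens_m C (cmp C f g) (cmp C f' g') = cmp C (tens_m C f f') (tens_m C g g')) \<and>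
     (\<forall>A \<in> Obj C. \<forall>B \<in> Obj C. \<forall>E \<in> Obj C.
        is_iso C (tens_o C (tens_o C A B) E) (tens_o C A (tens_o C B E)) (asc C A B E)) \<and>
     (\<forall>A \<in> Obj C. is_iso C (tens_o C (unit_o C) A) A (lu C A)) \<and>
     (\<forall>A \<in> Obj C. is_iso C (tens_o C A (unit_o C)) A (ru C A)) \<and>
     (\<forall>A B A' B' A'' B'' f g h. f \<in> Hom C A B \<longrightarrow> g \<in> Hom C A' B' \<longrightarrow> h \<in> Hom C A'' B'' \<longrightarrow>
        cmp C (tens_m C (tens_m C f g) h) (asc C B B' B'') =
        cmp C (asc C A A' A'') (tens_m C f (tens_m C g h))) \<and>
     (\<forall>A B f. f \<in> Hom C A B \<longrightarrow>
        cmp C (tens_m C (idm C (unit_o C)) f) (lu C B) = cmp C (lu C A) f) \<and>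
     (\<forall>A B f. f \<in> Hom C A B \<longrightarrow>
        cmp C (tens_m C f (idm C (unit_o C))) (ru C B) = cmp C (ru C A) f) \<and>
     (\<forall>A \<in> Obj C. \<forall>B \<in> Obj C. \<forall>E \<in> Obj C. \<forall>F \<in> Obj C.
        cmp C (asc C (tens_o C A B) E F) (asc C A B (tens_o C E F)) =
        cmp C (cmp C (tens_m C (asc C A B E) (idm C F)) (asc C A (tens_o C B E) F))
              (tens_m C (idm C A) (asc C B E F))) \<and>
     (\<forall>A \<in> Obj C. \<forall>B \<in> Obj C.
        cmp C (asc C A (unit_o C) B) (tens_m C (idm C A) (lu C B)) =
        tens_m C (ru C A) (idm C B))"

text \<open>Closedness: left and right residuals given by universal evaluation maps; this
  is equivalent to the natural bijections
  Hom(Y, X\Z) = Hom(X (x) Y, Z) = Hom(X, Z/Y).\<close>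

definition closed_monoidal :: "('o, 'm, 'z) mcat_scheme \<Rightarrow> bool" where
  "closed_monoidal C \<longleftrightarrow> monoidal C \<and>
     (\<forall>X \<in> Obj C. \<forall>Z \<in> Obj C.
        ldiv C X Z \<in> Obj C \<and>
        evL C X Z \<in> Hom C (tens_o C X (ldiv C X Z)) Z \<and>
        (\<forall>Y f. f \<in> Hom C (tens_o C X Y) Z \<longrightarrow>
           (\<exists>!g. g \<in> Hom C Y (ldiv C X Z) \<and> cmp C (tens_m C (idm C X) g) (evL C X Z) = f))) \<and>
     (\<forall>Y \<in> Obj C. \<forall>Z \<in> Obj C.
        rdiv C Z Y \<in> Obj C \<and>
        evR C Z Y \<in> Hom C (tens_o C (rdiv C Z Y) Y) Z \<and>
        (\<forall>X f. f \<in> Hom C (tens_o C X Y) Z \<longrightarrow>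
           (\<exists>!g. g \<in> Hom C X (rdiv C Z Y) \<and> cmp C (tens_m C g (idm C Y)) (evR C Z Y) = f)))"

text \<open>Action of the left residual functor on morphisms: for c : A \<rightarrow> A', d : C' \<rightarrow> Cc,
  ldiv_m C A A' C' Cc c d : A'\C' \<rightarrow> A\Cc.\<close>

definition ldiv_m :: "('o, 'm, 'z) mcat_scheme \<Rightarrow> 'o \<Rightarrow> 'o \<Rightarrow> 'o \<Rightarrow> 'o \<Rightarrow> 'm \<Rightarrow> 'm \<Rightarrow> 'm" where
  "ldiv_m C A A' C' Cc c d = (THE g. g \<in> Hom C (ldiv C A' C') (ldiv C A Cc) \<and>
      cmp C (tens_m C (idm C A) g) (evL C A Cc) =
      cmp C (cmp C (tens_m C c (idm C (ldiv C A' C'))) (evL C A' C')) d)"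

text \<open>Action of the right residual functor on morphisms: for d : C' \<rightarrow> Cc, c : B \<rightarrow> B',
  rdiv_m C B B' C' Cc d c : C'/B' \<rightarrow> Cc/B.\<close>

definition rdiv_m :: "('o, 'm, 'z) mcat_scheme \<Rightarrow> 'o \<Rightarrow> 'o \<Rightarrow> 'o \<Rightarrow> 'o \<Rightarrow> 'm \<Rightarrow> 'm \<Rightarrow> 'm" where
  "rdiv_m C B B' C' Cc d c = (THE g. g \<in> Hom C (rdiv C C' B') (rdiv C Cc B) \<and>
      cmp C (tens_m C g (idm C B)) (evR C Cc B) =
      cmp C (cmp C (tens_m C (idm C (rdiv C C' B')) c) (evR C C' B')) d)"

text \<open>A refinement system t : D \<rightarrow> T is given by its object part to and morphism part tm.\<close>

definition refines :: "('p, 'q, 'z) cat_scheme \<Rightarrow> ('p \<Rightarrow> 'a) \<Rightarrow> 'p \<Rightarrow> 'a \<Rightarrow> bool" where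
  "refines D to P A \<longleftrightarrow> P \<in> Obj D \<and> to P = A"

definition derivs :: "('p, 'q, 'z) cat_scheme \<Rightarrow> ('q \<Rightarrow> 'c) \<Rightarrow> 'p \<Rightarrow> 'c \<Rightarrow> 'p \<Rightarrow> 'q set" where
  "derivs D tm P c Q = {\<alpha>. \<alpha> \<in> Hom D P Q \<and> tm \<alpha> = c}"

definition closed_monoidal_refinement_system ::
  "('p, 'q, 'z1) mcat_scheme \<Rightarrow> ('a, 'c, 'z2) mcat_scheme \<Rightarrow> ('p \<Rightarrow> 'a) \<Rightarrow> ('q \<Rightarrow> 'c) \<Rightarrow> bool" where
  "closed_monoidal_refinement_system D T to tm \<longleftrightarrow>
     closed_monoidal D \<and> closed_monoidal T \<and> is_functor D T to tm \<and>
     (\<forall>P \<in> Obj D. \<forall>Q \<in> Obj D. to (tens_o D P Q) = tens_o T (to P) (to Q)) \<and>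
     (\<forall>P P' Q Q' \<alpha> \<beta>. \<alpha> \<in> Hom D P P' \<longrightarrow> \<beta> \<in> Hom D Q Q' \<longrightarrow>
        tm (tens_m D \<alpha> \<beta>) = tens_m T (tm \<alpha>) (tm \<beta>)) \<and>
     to (unit_o D) = unit_o T \<and>
     (\<forall>P \<in> Obj D. \<forall>Q \<in> Obj D. \<forall>R \<in> Obj D. tm (asc D P Q R) = asc T (to P) (to Q) (to R)) \<and>
     (\<forall>P \<in> Obj D. tm (lu D P) = lu T (to P) \<and> tm (ru D P) = ru T (to P)) \<and>
     (\<forall>P \<in> Obj D. \<forall>R \<in> Obj D.
        to (ldiv D P R) = ldiv T (to P) (to R) \<and> tm (evL D P R) = evL T (to P) (to R) \<and>
        to (rdiv D R P) = rdiv T (to R) (to P) \<and> tm (evR D R P) = evR T (to R) (to P))"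

text \<open>P' (with derivation lam of P' \<Rightarrow>_c Q) is a pullback c^*Q of Q along c : A \<rightarrow> B.\<close>

definition is_pullback ::
  "('p, 'q, 'z1) cat_scheme \<Rightarrow> ('a, 'c, 'z2) cat_scheme \<Rightarrow> ('p \<Rightarrow> 'a) \<Rightarrow> ('q \<Rightarrow> 'c) \<Rightarrow>
   'a \<Rightarrow> 'a \<Rightarrow> 'c \<Rightarrow> 'p \<Rightarrow> 'p \<Rightarrow> 'q \<Rightarrow> bool" where
  "is_pullback D T to tm A B c Q P' lam \<longleftrightarrow>
     c \<in> Hom T A B \<and> refines D to Q B \<and> refines D to P' A \<and> lam \<in> derivs D tm P' c Q \<and>
     (\<forall>X P d. refines D to P X \<longrightarrow> d \<in> Hom T X A \<longrightarrow>
        bij_betw (\<lambda>\<beta>. cmp D \<beta> lam) (derivs D tm P d P') (derivs D tm P (cmp T d c) Q))"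

text \<open>Q' (with derivation kap of P \<Rightarrow>_c Q') is a pushforward c_!P of P along c : A \<rightarrow> B.\<close>

definition is_pushforward ::
  "('p, 'q, 'z1) cat_scheme \<Rightarrow> ('a, 'c, 'z2) cat_scheme \<Rightarrow> ('p \<Rightarrow> 'a) \<Rightarrow> ('q \<Rightarrow> 'c) \<Rightarrow>
   'a \<Rightarrow> 'a \<Rightarrow> 'c \<Rightarrow> 'p \<Rightarrow> 'p \<Rightarrow> 'q \<Rightarrow> bool" where
  "is_pushforward D T to tm A B c P Q' kap \<longleftrightarrow>
     c \<in> Hom T A B \<and> refines D to P A \<and> refines D to Q' B \<and> kap \<in> derivs D tm P c Q' \<and>
     (\<forall>Y Q d. refines D to Q Y \<longrightarrow> d \<in> Hom T B Y \<longrightarrow>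
        bij_betw (\<lambda>\<beta>. cmp D kap \<beta>) (derivs D tm Q' d Q) (derivs D tm P (cmp T c d) Q))"

definition vert_iso ::
  "('p, 'q, 'z1) cat_scheme \<Rightarrow> ('a, 'c, 'z2) cat_scheme \<Rightarrow> ('p \<Rightarrow> 'a) \<Rightarrow> ('q \<Rightarrow> 'c) \<Rightarrow>
   'a \<Rightarrow> 'p \<Rightarrow> 'p \<Rightarrow> bool" where
  "vert_iso D T to tm A P Q \<longleftrightarrow> refines D to P A \<and> refines D to Q A \<and>
     (\<exists>f. is_iso D P Q f \<and> tm f = idm T A)"

end

theory Submission
  imports Defs
begin


locale cmc = fixes C :: "('o,'m,'z) mcat_scheme" assumes cm: "closed_monoidal C"
begin

lemma mon: "monoidal C" using cm unfolding closed_monoidal_def apply (elim conjE) by metis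
lemma cat: "category C" using mon unfolding monoidal_def apply (elim conjE) by metis

lemma objs1: "f \<in> Hom C A B \<Longrightarrow> A \<in> Obj C"
  using cat unfolding category_def apply (elim conjE) by metis
lemma objs2: "f \<in> Hom C A B \<Longrightarrow> B \<in> Obj C"
  using cat unfolding category_def apply (elim conjE) by metis
lemmas objs = objs1 objs2
lemma id_hom: "A \<in> Obj C \<Longrightarrow> idm C A \<in> Hom C A A"
  using cat unfolding category_def apply (elim conjE) by metis
lemma comp_hom: "f \<in> Hom C A B \<Longrightarrow> g \<in> Hom C B E \<Longrightarrow> cmp C f g \<in> Hom C A E"
  using cat unfolding category_def apply (elim conjE) by metis
lemma idl: "f \<in> Hom C A B \<Longrightarrow> cmp C (idm C A) f = f"
  using cat unfolding category_def apply (elim conjE) by metis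
lemma idr: "f \<in> Hom C A B \<Longrightarrow> cmp C f (idm C B) = f"
  using cat unfolding category_def apply (elim conjE) by metis
lemma assoc: "f \<in> Hom C A B \<Longrightarrow> g \<in> Hom C B E \<Longrightarrow> h \<in> Hom C E F \<Longrightarrow>
   cmp C (cmp C f g) h = cmp C f (cmp C g h)"
  using cat unfolding category_def apply (elim conjE) by metis
lemma tens_obj: "A \<in> Obj C \<Longrightarrow> B \<in> Obj C \<Longrightarrow> tens_o C A B \<in> Obj C"
  using mon unfolding monoidal_def apply (elim conjE) by metis
lemma tens_hom: "f \<in> Hom C A B \<Longrightarrow> g \<in> Hom C A' B' \<Longrightarrow> tens_m C f g \<in> Hom C (tens_o C A A') (tens_o C B B')"
  using mon unfolding monoidal_def apply (elim conjE) by metis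
lemma tens_id: "A \<in> Obj C \<Longrightarrow> B \<in> Obj C \<Longrightarrow> tens_m C (idm C A) (idm C B) = idm C (tens_o C A B)"
  using mon unfolding monoidal_def apply (elim conjE) by metis
lemma interchange: "f \<in> Hom C A B \<Longrightarrow> g \<in> Hom C B E \<Longrightarrow> f' \<in> Hom C A' B' \<Longrightarrow> g' \<in> Hom C B' E' \<Longrightarrow>
        tens_m C (cmp C f g) (cmp C f' g') = cmp C (tens_m C f f') (tens_m C g g')"
  using mon unfolding monoidal_def apply (elim conjE) by metis

lemma split1: "f \<in> Hom C A A' \<Longrightarrow> g \<in> Hom C B B' \<Longrightarrow>
   tens_m C f g = cmp C (tens_m C f (idm C B)) (tens_m C (idm C A') g)"
proof -
  assume f: "f \<in> Hom C A A'" and g: "g \<in> Hom C B B'"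
  have "tens_m C f g = tens_m C (cmp C f (idm C A')) (cmp C (idm C B) g)" using idl[OF g] idr[OF f] by simp
  also have "\<dots> = cmp C (tens_m C f (idm C B)) (tens_m C (idm C A') g)"
    by (rule interchange[OF f id_hom[OF objs2[OF f]] id_hom[OF objs1[OF g]] g])
  finally show ?thesis .
qed
lemma split2: "f \<in> Hom C A A' \<Longrightarrow> g \<in> Hom C B B' \<Longrightarrow>
   tens_m C f g = cmp C (tens_m C (idm C A) g) (tens_m C f (idm C B'))"
proof -
  assume f: "f \<in> Hom C A A'" and g: "g \<in> Hom C B B'"
  have "tens_m C f g = tens_m C (cmp C (idm C A) f) (cmp C g (idm C B'))" using idl[OF f] idr[OF g] by simp
  also have "\<dots> = cmp C (tens_m C (idm C A) g) (tens_m C f (idm C B'))"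
    by (rule interchange[OF id_hom[OF objs1[OF f]] f g id_hom[OF objs2[OF g]]])
  finally show ?thesis .
qed
lemma tens_cmp_idr: "f \<in> Hom C A B \<Longrightarrow> g \<in> Hom C B E \<Longrightarrow> X \<in> Obj C \<Longrightarrow>
   tens_m C (cmp C f g) (idm C X) = cmp C (tens_m C f (idm C X)) (tens_m C g (idm C X))"
  using interchange[of f A B g E "idm C X" X X "idm C X" X] id_hom idl[OF id_hom] by simp
lemma tens_cmp_idl: "f \<in> Hom C A B \<Longrightarrow> g \<in> Hom C B E \<Longrightarrow> X \<in> Obj C \<Longrightarrow>
   tens_m C (idm C X) (cmp C f g) = cmp C (tens_m C (idm C X) f) (tens_m C (idm C X) g)"
  using interchange[of "idm C X" X X "idm C X" X f A B g E] id_hom idl[OF id_hom] by simp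

lemma ldiv_obj: "X \<in> Obj C \<Longrightarrow> Z \<in> Obj C \<Longrightarrow> ldiv C X Z \<in> Obj C"
  using cm unfolding closed_monoidal_def apply (elim conjE) by metis
lemma evL_hom: "X \<in> Obj C \<Longrightarrow> Z \<in> Obj C \<Longrightarrow> evL C X Z \<in> Hom C (tens_o C X (ldiv C X Z)) Z"
  using cm unfolding closed_monoidal_def apply (elim conjE) by metis
lemma curryL_ex1: "X \<in> Obj C \<Longrightarrow> Z \<in> Obj C \<Longrightarrow> f \<in> Hom C (tens_o C X Y) Z \<Longrightarrow>
   \<exists>!g. g \<in> Hom C Y (ldiv C X Z) \<and> cmp C (tens_m C (idm C X) g) (evL C X Z) = f"
  using cm unfolding closed_monoidal_def apply (elim conjE) by metis
lemma curryL_ex: "X \<in> Obj C \<Longrightarrow> Z \<in> Obj C \<Longrightarrow> f \<in> Hom C (tens_o C X Y) Z \<Longrightarrow>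
   \<exists>g \<in> Hom C Y (ldiv C X Z). cmp C (tens_m C (idm C X) g) (evL C X Z) = f"
  using curryL_ex1 by blast
lemma curryL_uniq: "X \<in> Obj C \<Longrightarrow> Z \<in> Obj C \<Longrightarrow> g1 \<in> Hom C Y (ldiv C X Z) \<Longrightarrow> g2 \<in> Hom C Y (ldiv C X Z) \<Longrightarrow>
   cmp C (tens_m C (idm C X) g1) (evL C X Z) = cmp C (tens_m C (idm C X) g2) (evL C X Z) \<Longrightarrow> g1 = g2"
proof -
  assume X: "X \<in> Obj C" and Z: "Z \<in> Obj C" and g1: "g1 \<in> Hom C Y (ldiv C X Z)" and g2: "g2 \<in> Hom C Y (ldiv C X Z)"
    and e: "cmp C (tens_m C (idm C X) g1) (evL C X Z) = cmp C (tens_m C (idm C X) g2) (evL C X Z)"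
  have "cmp C (tens_m C (idm C X) g1) (evL C X Z) \<in> Hom C (tens_o C X Y) Z"
    using comp_hom tens_hom[OF id_hom[OF X] g1] evL_hom[OF X Z] by blast
  from curryL_ex1[OF X Z this] show ?thesis
    apply (rule ex1E)
    apply (frule spec[where x=g1], drule spec[where x=g2])
    using g1 g2 e by simp
qed
lemma rdiv_obj: "Y \<in> Obj C \<Longrightarrow> Z \<in> Obj C \<Longrightarrow> rdiv C Z Y \<in> Obj C"
  using cm unfolding closed_monoidal_def apply (elim conjE) by metis
lemma evR_hom: "Y \<in> Obj C \<Longrightarrow> Z \<in> Obj C \<Longrightarrow> evR C Z Y \<in> Hom C (tens_o C (rdiv C Z Y) Y) Z"
  using cm unfolding closed_monoidal_def apply (elim conjE) by metis
lemma curryR_ex1: "Y \<in> Obj C \<Longrightarrow> Z \<in> Obj C \<Longrightarrow> f \<in> Hom C (tens_o C X Y) Z \<Longrightarrow>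
   \<exists>!g. g \<in> Hom C X (rdiv C Z Y) \<and> cmp C (tens_m C g (idm C Y)) (evR C Z Y) = f"
  using cm unfolding closed_monoidal_def apply (elim conjE) by metis
lemma curryR_ex: "Y \<in> Obj C \<Longrightarrow> Z \<in> Obj C \<Longrightarrow> f \<in> Hom C (tens_o C X Y) Z \<Longrightarrow>
   \<exists>g \<in> Hom C X (rdiv C Z Y). cmp C (tens_m C g (idm C Y)) (evR C Z Y) = f"
  using curryR_ex1 by blast
lemma curryR_uniq: "Y \<in> Obj C \<Longrightarrow> Z \<in> Obj C \<Longrightarrow> g1 \<in> Hom C X (rdiv C Z Y) \<Longrightarrow> g2 \<in> Hom C X (rdiv C Z Y) \<Longrightarrow>
   cmp C (tens_m C g1 (idm C Y)) (evR C Z Y) = cmp C (tens_m C g2 (idm C Y)) (evR C Z Y) \<Longrightarrow> g1 = g2"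
proof -
  assume X: "Y \<in> Obj C" and Z: "Z \<in> Obj C" and g1: "g1 \<in> Hom C X (rdiv C Z Y)" and g2: "g2 \<in> Hom C X (rdiv C Z Y)"
    and e: "cmp C (tens_m C g1 (idm C Y)) (evR C Z Y) = cmp C (tens_m C g2 (idm C Y)) (evR C Z Y)"
  have "cmp C (tens_m C g1 (idm C Y)) (evR C Z Y) \<in> Hom C (tens_o C X Y) Z"
    using comp_hom tens_hom[OF g1 id_hom[OF X]] evR_hom[OF X Z] by blast
  from curryR_ex1[OF X Z this] show ?thesis
    apply (rule ex1E)
    apply (frule spec[where x=g1], drule spec[where x=g2])
    using g1 g2 e by simp
qed
end


lemma (in cmc) uncR_pre: "f \<in> Hom C W' W \<Longrightarrow> g \<in> Hom C W (rdiv C Z X) \<Longrightarrow> X \<in> Obj C \<Longrightarrow> Z \<in> Obj C \<Longrightarrow>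
  cmp C (tens_m C (cmp C f g) (idm C X)) (evR C Z X) =
  cmp C (tens_m C f (idm C X)) (cmp C (tens_m C g (idm C X)) (evR C Z X))"
  using tens_cmp_idr[of f W' W g "rdiv C Z X" X] assoc[OF tens_hom[of f W' W "idm C X" X X] tens_hom[of g W "rdiv C Z X" "idm C X" X X] evR_hom[of X Z]]
  id_hom by simp

lemma (in cmc) uncL_pre: "f \<in> Hom C W' W \<Longrightarrow> g \<in> Hom C W (ldiv C X Z) \<Longrightarrow> X \<in> Obj C \<Longrightarrow> Z \<in> Obj C \<Longrightarrow>
  cmp C (tens_m C (idm C X) (cmp C f g)) (evL C X Z) =
  cmp C (tens_m C (idm C X) f) (cmp C (tens_m C (idm C X) g) (evL C X Z))"
  using tens_cmp_idl[of f W' W g "ldiv C X Z" X] assoc[OF tens_hom[of "idm C X" X X f W' W] tens_hom[of "idm C X" X X g W "ldiv C X Z"] evL_hom[of X Z]]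
  id_hom by simp

locale crs =
  fixes D :: "('p,'q,'z1) mcat_scheme" and T :: "('a,'c,'z2) mcat_scheme"
    and to :: "'p \<Rightarrow> 'a" and tm :: "'q \<Rightarrow> 'c"
  assumes crs: "closed_monoidal_refinement_system D T to tm"
begin

sublocale D: cmc D
  by standard (use crs in \<open>simp add: closed_monoidal_refinement_system_def\<close>)
sublocale T: cmc T
  by standard (use crs in \<open>simp add: closed_monoidal_refinement_system_def\<close>)

lemma functor_ax: "is_functor D T to tm"
  using crs unfolding closed_monoidal_refinement_system_def by blast

lemma to_obj: "P \<in> Obj D \<Longrightarrow> to P \<in> Obj T"
  using functor_ax unfolding is_functor_def by blast
lemma tm_hom: "f \<in> Hom D P Q \<Longrightarrow> tm f \<in> Hom T (to P) (to Q)"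
  using functor_ax unfolding is_functor_def by blast
lemma tm_id: "P \<in> Obj D \<Longrightarrow> tm (idm D P) = idm T (to P)"
  using functor_ax unfolding is_functor_def by blast
lemma tm_cmp: "f \<in> Hom D A B \<Longrightarrow> g \<in> Hom D B E \<Longrightarrow> tm (cmp D f g) = cmp T (tm f) (tm g)"
  using functor_ax unfolding is_functor_def by blast
lemma to_tens: "P \<in> Obj D \<Longrightarrow> Q \<in> Obj D \<Longrightarrow> to (tens_o D P Q) = tens_o T (to P) (to Q)"
  using crs unfolding closed_monoidal_refinement_system_def by blast
lemma tm_tens: "f \<in> Hom D P P' \<Longrightarrow> g \<in> Hom D Q Q' \<Longrightarrow> tm (tens_m D f g) = tens_m T (tm f) (tm g)"
  using crs unfolding closed_monoidal_refinement_system_def by blast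
lemma to_ldiv: "P \<in> Obj D \<Longrightarrow> R \<in> Obj D \<Longrightarrow> to (ldiv D P R) = ldiv T (to P) (to R)"
  using crs unfolding closed_monoidal_refinement_system_def by blast
lemma tm_evL: "P \<in> Obj D \<Longrightarrow> R \<in> Obj D \<Longrightarrow> tm (evL D P R) = evL T (to P) (to R)"
  using crs unfolding closed_monoidal_refinement_system_def by blast
lemma to_rdiv: "P \<in> Obj D \<Longrightarrow> R \<in> Obj D \<Longrightarrow> to (rdiv D R P) = rdiv T (to R) (to P)"
  using crs unfolding closed_monoidal_refinement_system_def by blast
lemma tm_evR: "P \<in> Obj D \<Longrightarrow> R \<in> Obj D \<Longrightarrow> tm (evR D R P) = evR T (to R) (to P)"
  using crs unfolding closed_monoidal_refinement_system_def by blast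

lemma tm_uncR: "g \<in> Hom D W (rdiv D Z X) \<Longrightarrow> X \<in> Obj D \<Longrightarrow> Z \<in> Obj D \<Longrightarrow>
  tm (cmp D (tens_m D g (idm D X)) (evR D Z X)) = cmp T (tens_m T (tm g) (idm T (to X))) (evR T (to Z) (to X))"
proof -
  assume g: "g \<in> Hom D W (rdiv D Z X)" and X: "X \<in> Obj D" and Z: "Z \<in> Obj D"
  have h: "tens_m D g (idm D X) \<in> Hom D (tens_o D W X) (tens_o D (rdiv D Z X) X)" by (rule D.tens_hom[OF g D.id_hom[OF X]])
  show ?thesis using tm_cmp[OF h D.evR_hom[OF X Z]] tm_tens[OF g D.id_hom[OF X]] tm_id[OF X] tm_evR[OF X Z] by simp
qed
lemma tm_uncL: "g \<in> Hom D W (ldiv D X Z) \<Longrightarrow> X \<in> Obj D \<Longrightarrow> Z \<in> Obj D \<Longrightarrow>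
  tm (cmp D (tens_m D (idm D X) g) (evL D X Z)) = cmp T (tens_m T (idm T (to X)) (tm g)) (evL T (to X) (to Z))"
proof -
  assume g: "g \<in> Hom D W (ldiv D X Z)" and X: "X \<in> Obj D" and Z: "Z \<in> Obj D"
  have h: "tens_m D (idm D X) g \<in> Hom D (tens_o D X W) (tens_o D X (ldiv D X Z))" by (rule D.tens_hom[OF D.id_hom[OF X] g])
  show ?thesis using tm_cmp[OF h D.evL_hom[OF X Z]] tm_tens[OF D.id_hom[OF X] g] tm_id[OF X] tm_evL[OF X Z] by simp
qed

lemma tm_curryR_eq: "g \<in> Hom D W (rdiv D Z X) \<Longrightarrow> X \<in> Obj D \<Longrightarrow> Z \<in> Obj D \<Longrightarrow>
  e \<in> Hom T (to W) (rdiv T (to Z) (to X)) \<Longrightarrow>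
  cmp T (tens_m T e (idm T (to X))) (evR T (to Z) (to X)) = tm (cmp D (tens_m D g (idm D X)) (evR D Z X)) \<Longrightarrow>
  tm g = e"
  by (rule T.curryR_uniq[of "to X" "to Z"]) (auto simp: tm_uncR to_obj to_rdiv dest: tm_hom)
lemma tm_curryL_eq: "g \<in> Hom D W (ldiv D X Z) \<Longrightarrow> X \<in> Obj D \<Longrightarrow> Z \<in> Obj D \<Longrightarrow>
  e \<in> Hom T (to W) (ldiv T (to X) (to Z)) \<Longrightarrow>
  cmp T (tens_m T (idm T (to X)) e) (evL T (to X) (to Z)) = tm (cmp D (tens_m D (idm D X) g) (evL D X Z)) \<Longrightarrow>
  tm g = e"
  by (rule T.curryL_uniq[of "to X" "to Z"]) (auto simp: tm_uncL to_obj to_ldiv dest: tm_hom)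

lemma pf_basic: "is_pushforward D T to tm A A' c P P' k \<Longrightarrow>
  c \<in> Hom T A A' \<and> P \<in> Obj D \<and> to P = A \<and> P' \<in> Obj D \<and> to P' = A' \<and> k \<in> Hom D P P' \<and> tm k = c"
  unfolding is_pushforward_def refines_def derivs_def by blast
lemma pf_inj: assumes "is_pushforward D T to tm A A' c P P' k" "Y \<in> Obj D" "e \<in> Hom T A' (to Y)"
  "d1 \<in> Hom D P' Y" "d2 \<in> Hom D P' Y" "tm d1 = e" "tm d2 = e" "cmp D k d1 = cmp D k d2"
  shows "d1 = d2"
proof -
  have "bij_betw (\<lambda>\<beta>. cmp D k \<beta>) (derivs D tm P' e Y) (derivs D tm P (cmp T c e) Y)"
    using assms unfolding is_pushforward_def refines_def by blast
  then show ?thesis using assms unfolding bij_betw_def inj_on_def derivs_def by blast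
qed
lemma pf_surj: assumes "is_pushforward D T to tm A A' c P P' k" "Y \<in> Obj D" "e \<in> Hom T A' (to Y)"
  "g \<in> Hom D P Y" "tm g = cmp T c e"
  shows "\<exists>d \<in> Hom D P' Y. tm d = e \<and> cmp D k d = g"
proof -
  have "bij_betw (\<lambda>\<beta>. cmp D k \<beta>) (derivs D tm P' e Y) (derivs D tm P (cmp T c e) Y)"
    using assms unfolding is_pushforward_def refines_def by blast
  then have "g \<in> (\<lambda>\<beta>. cmp D k \<beta>) ` derivs D tm P' e Y" using assms unfolding bij_betw_def derivs_def by blast
  then show ?thesis unfolding derivs_def by blast
qed
lemma pb_basic: "is_pullback D T to tm A B c Q P' lam \<Longrightarrow>
  c \<in> Hom T A B \<and> Q \<in> Obj D \<and> to Q = B \<and> P' \<in> Obj D \<and> to P' = A \<and> lam \<in> Hom D P' Q \<and> tm lam = c"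
  unfolding is_pullback_def refines_def derivs_def by blast
lemma pb_inj: assumes "is_pullback D T to tm A B c Q P' lam" "X \<in> Obj D" "e \<in> Hom T (to X) A"
  "b1 \<in> Hom D X P'" "b2 \<in> Hom D X P'" "tm b1 = e" "tm b2 = e" "cmp D b1 lam = cmp D b2 lam"
  shows "b1 = b2"
proof -
  have "bij_betw (\<lambda>\<beta>. cmp D \<beta> lam) (derivs D tm X e P') (derivs D tm X (cmp T e c) Q)"
    using assms unfolding is_pullback_def refines_def by blast
  then show ?thesis using assms unfolding bij_betw_def inj_on_def derivs_def by blast
qed
lemma pb_surj: assumes "is_pullback D T to tm A B c Q P' lam" "X \<in> Obj D" "e \<in> Hom T (to X) A"
  "g \<in> Hom D X Q" "tm g = cmp T e c"
  shows "\<exists>b \<in> Hom D X P'. tm b = e \<and> cmp D b lam = g"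
proof -
  have "bij_betw (\<lambda>\<beta>. cmp D \<beta> lam) (derivs D tm X e P') (derivs D tm X (cmp T e c) Q)"
    using assms unfolding is_pullback_def refines_def by blast
  then have "g \<in> (\<lambda>\<beta>. cmp D \<beta> lam) ` derivs D tm X e P'" using assms unfolding bij_betw_def derivs_def by blast
  then show ?thesis unfolding derivs_def by blast
qed

end

context crs begin

lemma RI: assumes pf: "is_pushforward D T to tm A A' c P P' k" and X: "X \<in> Obj D" and Z: "Z \<in> Obj D"
  and g1: "g1 \<in> Hom D (tens_o D P' X) Z" and g2: "g2 \<in> Hom D (tens_o D P' X) Z"
  and tmeq: "tm g1 = tm g2"
  and eq: "cmp D (tens_m D k (idm D X)) g1 = cmp D (tens_m D k (idm D X)) g2"
  shows "g1 = g2"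
proof -
  note b = pf_basic[OF pf]
  obtain d1 where d1: "d1 \<in> Hom D P' (rdiv D Z X)" "cmp D (tens_m D d1 (idm D X)) (evR D Z X) = g1"
    using D.curryR_ex[OF X Z g1] by blast
  obtain d2 where d2: "d2 \<in> Hom D P' (rdiv D Z X)" "cmp D (tens_m D d2 (idm D X)) (evR D Z X) = g2"
    using D.curryR_ex[OF X Z g2] by blast
  have h1: "tm d1 \<in> Hom T (to P') (rdiv T (to Z) (to X))" using tm_hom[OF d1(1)] to_rdiv X Z by simp
  have "tm d2 = tm d1"
    apply (rule tm_curryR_eq[OF d2(1) X Z h1])
    using tm_uncR[OF d1(1) X Z] d1(2) d2(2) tmeq by simp
  moreover have "cmp D k d1 = cmp D k d2"
    apply (rule D.curryR_uniq[OF X Z])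
    using D.comp_hom b d1 d2 apply blast
    using D.comp_hom b d1 d2 apply blast
    using D.uncR_pre[OF _ d1(1) X Z, of k P] D.uncR_pre[OF _ d2(1) X Z, of k P] b d1 d2 eq by simp
  ultimately show ?thesis
    using pf_inj[OF pf D.rdiv_obj[OF X Z], of "tm d1" d1 d2] h1 b d1 d2 to_rdiv[OF X Z] by auto
qed

lemma LI: assumes pf: "is_pushforward D T to tm A A' c P P' k" and X: "X \<in> Obj D" and Z: "Z \<in> Obj D"
  and g1: "g1 \<in> Hom D (tens_o D X P') Z" and g2: "g2 \<in> Hom D (tens_o D X P') Z"
  and tmeq: "tm g1 = tm g2"
  and eq: "cmp D (tens_m D (idm D X) k) g1 = cmp D (tens_m D (idm D X) k) g2"
  shows "g1 = g2"
proof -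
  note b = pf_basic[OF pf]
  obtain d1 where d1: "d1 \<in> Hom D P' (ldiv D X Z)" "cmp D (tens_m D (idm D X) d1) (evL D X Z) = g1"
    using D.curryL_ex[OF X Z g1] by blast
  obtain d2 where d2: "d2 \<in> Hom D P' (ldiv D X Z)" "cmp D (tens_m D (idm D X) d2) (evL D X Z) = g2"
    using D.curryL_ex[OF X Z g2] by blast
  have h1: "tm d1 \<in> Hom T (to P') (ldiv T (to X) (to Z))" using tm_hom[OF d1(1)] to_ldiv X Z by simp
  have "tm d2 = tm d1"
    apply (rule tm_curryL_eq[OF d2(1) X Z h1])
    using tm_uncL[OF d1(1) X Z] d1(2) d2(2) tmeq by simp
  moreover have "cmp D k d1 = cmp D k d2"
    apply (rule D.curryL_uniq[OF X Z])
    using D.comp_hom b d1 d2 apply blast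
    using D.comp_hom b d1 d2 apply blast
    using D.uncL_pre[OF _ d1(1) X Z, of k P] D.uncL_pre[OF _ d2(1) X Z, of k P] b d1 d2 eq by simp
  ultimately show ?thesis
    using pf_inj[OF pf D.ldiv_obj[OF X Z], of "tm d1" d1 d2] h1 b d1 d2 to_ldiv[OF X Z] by auto
qed

lemma RE: assumes pf: "is_pushforward D T to tm A A' c P P' k" and X: "X \<in> Obj D" and Z: "Z \<in> Obj D"
  and g: "g \<in> Hom D (tens_o D P X) Z" and e: "e \<in> Hom T (tens_o T A' (to X)) (to Z)"
  and tmg: "tm g = cmp T (tens_m T c (idm T (to X))) e"
  shows "\<exists>g' \<in> Hom D (tens_o D P' X) Z. tm g' = e \<and> cmp D (tens_m D k (idm D X)) g' = g"
proof -
  note b = pf_basic[OF pf]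
  have tX: "to X \<in> Obj T" and tZ: "to Z \<in> Obj T" using X Z to_obj by auto
  obtain d0 where d0: "d0 \<in> Hom D P (rdiv D Z X)" "cmp D (tens_m D d0 (idm D X)) (evR D Z X) = g"
    using D.curryR_ex[OF X Z g] by blast
  obtain eT where eT: "eT \<in> Hom T A' (rdiv T (to Z) (to X))" "cmp T (tens_m T eT (idm T (to X))) (evR T (to Z) (to X)) = e"
    using T.curryR_ex[OF tX tZ e] by blast
  have ce: "cmp T c eT \<in> Hom T (to P) (rdiv T (to Z) (to X))" using T.comp_hom b eT by auto
  have "tm d0 = cmp T c eT"
    apply (rule tm_curryR_eq[OF d0(1) X Z ce])
    using T.uncR_pre[of c A A' eT "to Z" "to X"] b eT tX tZ d0 tmg by simp
  then obtain d where d: "d \<in> Hom D P' (rdiv D Z X)" "tm d = eT" "cmp D k d = d0"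
    using pf_surj[OF pf D.rdiv_obj[OF X Z], of eT d0] eT d0 to_rdiv X Z by auto
  define g' where "g' = cmp D (tens_m D d (idm D X)) (evR D Z X)"
  have "g' \<in> Hom D (tens_o D P' X) Z" unfolding g'_def
    by (meson D.comp_hom D.tens_hom D.id_hom D.evR_hom X Z d(1))
  moreover have "tm g' = e" unfolding g'_def using tm_uncR[OF d(1) X Z] d eT by simp
  moreover have "cmp D (tens_m D k (idm D X)) g' = g" unfolding g'_def
    using D.uncR_pre[of k P P' d Z X] b d d0 X Z by simp
  ultimately show ?thesis by blast
qed

lemma LE: assumes pf: "is_pushforward D T to tm A A' c P P' k" and X: "X \<in> Obj D" and Z: "Z \<in> Obj D"
  and g: "g \<in> Hom D (tens_o D X P) Z" and e: "e \<in> Hom T (tens_o T (to X) A') (to Z)"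
  and tmg: "tm g = cmp T (tens_m T (idm T (to X)) c) e"
  shows "\<exists>g' \<in> Hom D (tens_o D X P') Z. tm g' = e \<and> cmp D (tens_m D (idm D X) k) g' = g"
proof -
  note b = pf_basic[OF pf]
  have tX: "to X \<in> Obj T" and tZ: "to Z \<in> Obj T" using X Z to_obj by auto
  obtain d0 where d0: "d0 \<in> Hom D P (ldiv D X Z)" "cmp D (tens_m D (idm D X) d0) (evL D X Z) = g"
    using D.curryL_ex[OF X Z g] by blast
  obtain eT where eT: "eT \<in> Hom T A' (ldiv T (to X) (to Z))" "cmp T (tens_m T (idm T (to X)) eT) (evL T (to X) (to Z)) = e"
    using T.curryL_ex[OF tX tZ e] by blast
  have ce: "cmp T c eT \<in> Hom T (to P) (ldiv T (to X) (to Z))" using T.comp_hom b eT by auto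
  have "tm d0 = cmp T c eT"
    apply (rule tm_curryL_eq[OF d0(1) X Z ce])
    using T.uncL_pre[of c A A' eT "to X" "to Z"] b eT tX tZ d0 tmg by simp
  then obtain d where d: "d \<in> Hom D P' (ldiv D X Z)" "tm d = eT" "cmp D k d = d0"
    using pf_surj[OF pf D.ldiv_obj[OF X Z], of eT d0] eT d0 to_ldiv X Z by auto
  define g' where "g' = cmp D (tens_m D (idm D X) d) (evL D X Z)"
  have "g' \<in> Hom D (tens_o D X P') Z" unfolding g'_def
    by (meson D.comp_hom D.tens_hom D.id_hom D.evL_hom X Z d(1))
  moreover have "tm g' = e" unfolding g'_def using tm_uncL[OF d(1) X Z] d eT by simp
  moreover have "cmp D (tens_m D (idm D X) k) g' = g" unfolding g'_def
    using D.uncL_pre[of k P P' d X Z] b d d0 X Z by simp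
  ultimately show ?thesis by blast
qed

end

context crs begin

lemma partA:
  assumes pf1: "is_pushforward D T to tm A A' c P P' k1"
    and pf2: "is_pushforward D T to tm B B' d Q Q' k2"
    and pf3: "is_pushforward D T to tm (tens_o T A B) (tens_o T A' B') (tens_m T c d) (tens_o D P Q) S k3"
  shows "vert_iso D T to tm (tens_o T A' B') S (tens_o D P' Q')"
proof -
  note b1 = pf_basic[OF pf1] and b2 = pf_basic[OF pf2] and b3 = pf_basic[OF pf3]
  have P: "P \<in> Obj D" and P': "P' \<in> Obj D" and Q: "Q \<in> Obj D" and Q': "Q' \<in> Obj D" and S: "S \<in> Obj D"
    using b1 b2 b3 by auto
  have k1: "k1 \<in> Hom D P P'" and k2: "k2 \<in> Hom D Q Q'" and k3: "k3 \<in> Hom D (tens_o D P Q) S"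
    using b1 b2 b3 by auto
  have c: "c \<in> Hom T A A'" and d: "d \<in> Hom T B B'" using b1 b2 by auto
  have toS: "to S = tens_o T A' B'" using b3 by auto
  have toPQ': "to (tens_o D P' Q') = tens_o T A' B'" using to_tens[OF P' Q'] b1 b2 by simp
  have PQ': "tens_o D P' Q' \<in> Obj D" using D.tens_obj[OF P' Q'] .
  define \<kappa> where "\<kappa> = tens_m D k1 k2"
  have kap: "\<kappa> \<in> Hom D (tens_o D P Q) (tens_o D P' Q')" unfolding \<kappa>_def using D.tens_hom[OF k1 k2] .
  have tmkap: "tm \<kappa> = tens_m T c d" unfolding \<kappa>_def using tm_tens[OF k1 k2] b1 b2 by simp
  have kapsplit: "\<kappa> = cmp D (tens_m D (idm D P) k2) (tens_m D k1 (idm D Q'))"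
    unfolding \<kappa>_def by (rule D.split2[OF k1 k2])
  have A'o: "A' \<in> Obj T" and B'o: "B' \<in> Obj T" and Ao: "A \<in> Obj T" using c d T.objs by auto
  have idAB: "idm T (tens_o T A' B') \<in> Hom T (tens_o T A' B') (tens_o T A' B')"
    using T.id_hom T.tens_obj A'o B'o by blast
  have e1: "tens_m T c (idm T B') \<in> Hom T (tens_o T (to P) B') (to S)"
    using T.tens_hom[OF c T.id_hom[OF B'o]] b1 toS by simp
  have "tm k3 = cmp T (tens_m T (idm T (to P)) d) (tens_m T c (idm T B'))"
    using b3 b1 T.split2[OF c d] by simp
  then obtain g' where g': "g' \<in> Hom D (tens_o D P Q') S" "tm g' = tens_m T c (idm T B')"
      "cmp D (tens_m D (idm D P) k2) g' = k3"
    using LE[OF pf2 P S k3 e1] b2 by auto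
  have e2: "idm T (tens_o T A' B') \<in> Hom T (tens_o T A' (to Q')) (to S)" using idAB b2 toS by simp
  have "tm g' = cmp T (tens_m T c (idm T (to Q'))) (idm T (tens_o T A' B'))"
    using g'(2) b2 T.idr[OF T.tens_hom[OF c T.id_hom[OF B'o]]] by simp
  then obtain f where f: "f \<in> Hom D (tens_o D P' Q') S" "tm f = idm T (tens_o T A' B')"
      "cmp D (tens_m D k1 (idm D Q')) f = g'"
    using RE[OF pf1 Q' S g'(1) e2] by auto
  have h1: "tens_m D (idm D P) k2 \<in> Hom D (tens_o D P Q) (tens_o D P Q')" using D.tens_hom[OF D.id_hom[OF P] k2] .
  have h2: "tens_m D k1 (idm D Q') \<in> Hom D (tens_o D P Q') (tens_o D P' Q')" using D.tens_hom[OF k1 D.id_hom[OF Q']] .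
  have kf: "cmp D \<kappa> f = k3"
    using kapsplit D.assoc[OF h1 h2 f(1)] f(3) g'(3) by simp
  have e3: "idm T (tens_o T A' B') \<in> Hom T (tens_o T A' B') (to (tens_o D P' Q'))" using idAB toPQ' by simp
  have "tm \<kappa> = cmp T (tens_m T c d) (idm T (tens_o T A' B'))"
    using tmkap T.idr[OF T.tens_hom[OF c d]] by simp
  then obtain g where g: "g \<in> Hom D S (tens_o D P' Q')" "tm g = idm T (tens_o T A' B')" "cmp D k3 g = \<kappa>"
    using pf_surj[OF pf3 PQ' e3 kap] by auto
  have gf: "cmp D g f = idm D S"
  proof (rule pf_inj[OF pf3 S])
    show "idm T (tens_o T A' B') \<in> Hom T (tens_o T A' B') (to S)" using idAB toS by simp
    show "cmp D g f \<in> Hom D S S" using D.comp_hom g f by blast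
    show "idm D S \<in> Hom D S S" using D.id_hom[OF S] .
    show "tm (cmp D g f) = idm T (tens_o T A' B')" using tm_cmp[OF g(1) f(1)] g f T.idl[OF idAB] by simp
    show "tm (idm D S) = idm T (tens_o T A' B')" using tm_id[OF S] toS by simp
    show "cmp D k3 (cmp D g f) = cmp D k3 (idm D S)"
      using D.assoc[OF k3 g(1) f(1), symmetric] g(3) kf D.idr[OF k3] by simp
  qed
  have fgh: "cmp D f g \<in> Hom D (tens_o D P' Q') (tens_o D P' Q')" using D.comp_hom f g by blast
  have idh: "idm D (tens_o D P' Q') \<in> Hom D (tens_o D P' Q') (tens_o D P' Q')" using D.id_hom[OF PQ'] .
  have tmfg: "tm (cmp D f g) = tm (idm D (tens_o D P' Q'))"
    using tm_cmp[OF f(1) g(1)] f g T.idl[OF idAB] tm_id[OF PQ'] toPQ' by simp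
  have eqk: "cmp D \<kappa> (cmp D f g) = cmp D \<kappa> (idm D (tens_o D P' Q'))"
    using D.assoc[OF kap f(1) g(1), symmetric] kf g(3) D.idr[OF kap] by simp
  have fg: "cmp D f g = idm D (tens_o D P' Q')"
  proof (rule RI[OF pf1 Q' PQ' fgh idh tmfg])
    show "cmp D (tens_m D k1 (idm D Q')) (cmp D f g) = cmp D (tens_m D k1 (idm D Q')) (idm D (tens_o D P' Q'))"
    proof (rule LI[OF pf2 P PQ'])
      show "cmp D (tens_m D k1 (idm D Q')) (cmp D f g) \<in> Hom D (tens_o D P Q') (tens_o D P' Q')"
        using D.comp_hom h2 fgh by blast
      show "cmp D (tens_m D k1 (idm D Q')) (idm D (tens_o D P' Q')) \<in> Hom D (tens_o D P Q') (tens_o D P' Q')"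
        using D.comp_hom h2 idh by blast
      show "tm (cmp D (tens_m D k1 (idm D Q')) (cmp D f g)) = tm (cmp D (tens_m D k1 (idm D Q')) (idm D (tens_o D P' Q')))"
        using tm_cmp[OF h2 fgh] tm_cmp[OF h2 idh] tmfg by simp
      show "cmp D (tens_m D (idm D P) k2) (cmp D (tens_m D k1 (idm D Q')) (cmp D f g)) =
            cmp D (tens_m D (idm D P) k2) (cmp D (tens_m D k1 (idm D Q')) (idm D (tens_o D P' Q')))"
        using D.assoc[OF h1 h2 fgh] D.assoc[OF h1 h2 idh] eqk kapsplit by simp
    qed
  qed
  show ?thesis unfolding vert_iso_def refines_def is_iso_def
    using S toS PQ' toPQ' g f gf fg by blast
qed

end

lemma (in cmc) ldiv_m_prop: assumes c: "c \<in> Hom C A A'" and d: "d \<in> Hom C C' Cc"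
  shows "ldiv_m C A A' C' Cc c d \<in> Hom C (ldiv C A' C') (ldiv C A Cc) \<and>
    cmp C (tens_m C (idm C A) (ldiv_m C A A' C' Cc c d)) (evL C A Cc) =
    cmp C (cmp C (tens_m C c (idm C (ldiv C A' C'))) (evL C A' C')) d"
proof -
  have A: "A \<in> Obj C" and A': "A' \<in> Obj C" and C': "C' \<in> Obj C" and Cc: "Cc \<in> Obj C" using c d objs by auto
  have "cmp C (cmp C (tens_m C c (idm C (ldiv C A' C'))) (evL C A' C')) d \<in> Hom C (tens_o C A (ldiv C A' C')) Cc"
    using comp_hom tens_hom[OF c id_hom[OF ldiv_obj[OF A' C']]] evL_hom[OF A' C'] d by blast
  from theI'[OF curryL_ex1[OF A Cc this]] show ?thesis unfolding ldiv_m_def .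
qed

lemma (in cmc) rdiv_m_prop: assumes c: "c \<in> Hom C B B'" and d: "d \<in> Hom C C' Cc"
  shows "rdiv_m C B B' C' Cc d c \<in> Hom C (rdiv C C' B') (rdiv C Cc B) \<and>
    cmp C (tens_m C (rdiv_m C B B' C' Cc d c) (idm C B)) (evR C Cc B) =
    cmp C (cmp C (tens_m C (idm C (rdiv C C' B')) c) (evR C C' B')) d"
proof -
  have B: "B \<in> Obj C" and B': "B' \<in> Obj C" and C': "C' \<in> Obj C" and Cc: "Cc \<in> Obj C" using c d objs by auto
  have "cmp C (cmp C (tens_m C (idm C (rdiv C C' B')) c) (evR C C' B')) d \<in> Hom C (tens_o C (rdiv C C' B') B) Cc"
    using comp_hom tens_hom[OF id_hom[OF rdiv_obj[OF B' C']] c] evR_hom[OF B' C'] d by blast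
  from theI'[OF curryR_ex1[OF B Cc this]] show ?thesis unfolding rdiv_m_def .
qed

context crs begin

lemma partB:
  assumes pf: "is_pushforward D T to tm A A' c P P' k"
    and pb1: "is_pullback D T to tm C' Cc d R R' l1"
    and pb2: "is_pullback D T to tm (ldiv T A' C') (ldiv T A Cc) (ldiv_m T A A' C' Cc c d) (ldiv D P R) S l2"
  shows "vert_iso D T to tm (ldiv T A' C') (ldiv D P' R') S"
proof -
  note b = pf_basic[OF pf] and p1 = pb_basic[OF pb1] and p2 = pb_basic[OF pb2]
  define m where "m = ldiv_m T A A' C' Cc c d"
  have c: "c \<in> Hom T A A'" and d: "d \<in> Hom T C' Cc" using b p1 by auto
  have mh: "m \<in> Hom T (ldiv T A' C') (ldiv T A Cc)" and
    mp: "cmp T (tens_m T (idm T A) m) (evL T A Cc) = cmp T (cmp T (tens_m T c (idm T (ldiv T A' C'))) (evL T A' C')) d"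
    using T.ldiv_m_prop[OF c d] unfolding m_def by auto
  have Ao: "A \<in> Obj T" and A'o: "A' \<in> Obj T" and C'o: "C' \<in> Obj T" and Cco: "Cc \<in> Obj T" using c d T.objs by auto
  have LAo: "ldiv T A' C' \<in> Obj T" using T.ldiv_obj[OF A'o C'o] .
  have P: "P \<in> Obj D" and P': "P' \<in> Obj D" and R: "R \<in> Obj D" and R': "R' \<in> Obj D" and S: "S \<in> Obj D"
    using b p1 p2 by auto
  have k: "k \<in> Hom D P P'" and l1: "l1 \<in> Hom D R' R" and l2: "l2 \<in> Hom D S (ldiv D P R)" using b p1 p2 by auto
  have tmk: "tm k = c" and tml1: "tm l1 = d" and tml2: "tm l2 = m" using b p1 p2 m_def by auto
  have toP: "to P = A" and toP': "to P' = A'" and toR: "to R = Cc" and toR': "to R' = C'" and toS: "to S = ldiv T A' C'"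
    using b p1 p2 by auto
  define S' where "S' = ldiv D P' R'"
  have S'o: "S' \<in> Obj D" unfolding S'_def using D.ldiv_obj[OF P' R'] .
  have toS': "to S' = ldiv T A' C'" unfolding S'_def using to_ldiv[OF P' R'] toP' toR' by simp
  have ev': "evL D P' R' \<in> Hom D (tens_o D P' S') R'" unfolding S'_def using D.evL_hom[OF P' R'] .
  have tmev': "tm (evL D P' R') = evL T A' C'" using tm_evL[OF P' R'] toP' toR' by simp
  define E where "E = cmp D (evL D P' R') l1"
  have Eh: "E \<in> Hom D (tens_o D P' S') R" unfolding E_def using D.comp_hom ev' l1 by blast
  have tmE: "tm E = cmp T (evL T A' C') d" unfolding E_def using tm_cmp[OF ev' l1] tmev' tml1 by simp
  define \<nu> where "\<nu> = cmp D (tens_m D k (idm D S')) E"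
  have kS': "tens_m D k (idm D S') \<in> Hom D (tens_o D P S') (tens_o D P' S')" using D.tens_hom[OF k D.id_hom[OF S'o]] .
  have nuh: "\<nu> \<in> Hom D (tens_o D P S') R" unfolding \<nu>_def using D.comp_hom kS' Eh by blast
  have tmnu: "tm \<nu> = cmp T (tens_m T c (idm T (ldiv T A' C'))) (cmp T (evL T A' C') d)"
    unfolding \<nu>_def using tm_cmp[OF kS' Eh] tm_tens[OF k D.id_hom[OF S'o]] tm_id[OF S'o] toS' tmk tmE by simp
  have evLT: "evL T A' C' \<in> Hom T (tens_o T A' (ldiv T A' C')) C'" using T.evL_hom[OF A'o C'o] .
  have cid: "tens_m T c (idm T (ldiv T A' C')) \<in> Hom T (tens_o T A (ldiv T A' C')) (tens_o T A' (ldiv T A' C'))"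
    using T.tens_hom[OF c T.id_hom[OF LAo]] .
  have mp2: "cmp T (tens_m T (idm T A) m) (evL T A Cc) = cmp T (tens_m T c (idm T (ldiv T A' C'))) (cmp T (evL T A' C') d)"
    using mp T.assoc[OF cid evLT d] by simp
  obtain lam where lam: "lam \<in> Hom D S' (ldiv D P R)" "cmp D (tens_m D (idm D P) lam) (evL D P R) = \<nu>"
    using D.curryL_ex[OF P R nuh] by blast
  have tmlam: "tm lam = m"
  proof (rule tm_curryL_eq[OF lam(1) P R])
    show "m \<in> Hom T (to S') (ldiv T (to P) (to R))" using mh toS' toP toR by simp
    show "cmp T (tens_m T (idm T (to P)) m) (evL T (to P) (to R)) = tm (cmp D (tens_m D (idm D P) lam) (evL D P R))"
      using lam(2) tmnu mp2 toP toR by simp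
  qed
  have key: "cmp D (tens_m D (idm D P) (cmp D \<beta> lam)) (evL D P R) =
      cmp D (tens_m D k (idm D W)) (cmp D (tens_m D (idm D P') \<beta>) E)"
    if \<beta>: "\<beta> \<in> Hom D W S'" and W: "W \<in> Obj D" for \<beta> W
  proof -
    have h1: "tens_m D (idm D P) \<beta> \<in> Hom D (tens_o D P W) (tens_o D P S')" using D.tens_hom[OF D.id_hom[OF P] \<beta>] .
    have h2: "tens_m D k (idm D W) \<in> Hom D (tens_o D P W) (tens_o D P' W)" using D.tens_hom[OF k D.id_hom[OF W]] .
    have h3: "tens_m D (idm D P') \<beta> \<in> Hom D (tens_o D P' W) (tens_o D P' S')" using D.tens_hom[OF D.id_hom[OF P'] \<beta>] .
    have "cmp D (tens_m D (idm D P) (cmp D \<beta> lam)) (evL D P R) = cmp D (tens_m D (idm D P) \<beta>) \<nu>"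
      using D.uncL_pre[OF \<beta> lam(1) P R] lam(2) by simp
    also have "\<dots> = cmp D (cmp D (tens_m D (idm D P) \<beta>) (tens_m D k (idm D S'))) E"
      unfolding \<nu>_def using D.assoc[OF h1 kS' Eh] by simp
    also have "\<dots> = cmp D (tens_m D k \<beta>) E" using D.split2[OF k \<beta>] by simp
    also have "\<dots> = cmp D (cmp D (tens_m D k (idm D W)) (tens_m D (idm D P') \<beta>)) E" using D.split1[OF k \<beta>] by simp
    also have "\<dots> = cmp D (tens_m D k (idm D W)) (cmp D (tens_m D (idm D P') \<beta>) E)"
      using D.assoc[OF h2 h3 Eh] .
    finally show ?thesis .
  qed
  have lamInj: "b1 = b2" if W: "W \<in> Obj D" and b1: "b1 \<in> Hom D W S'" and b2: "b2 \<in> Hom D W S'"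
    and tmb: "tm b1 = tm b2" and eqb: "cmp D b1 lam = cmp D b2 lam" for W b1 b2
  proof -
    have h1: "tens_m D (idm D P') b1 \<in> Hom D (tens_o D P' W) (tens_o D P' S')" using D.tens_hom[OF D.id_hom[OF P'] b1] .
    have h2: "tens_m D (idm D P') b2 \<in> Hom D (tens_o D P' W) (tens_o D P' S')" using D.tens_hom[OF D.id_hom[OF P'] b2] .
    have r1: "cmp D (tens_m D (idm D P') b1) E \<in> Hom D (tens_o D P' W) R" using D.comp_hom h1 Eh by blast
    have r2: "cmp D (tens_m D (idm D P') b2) E \<in> Hom D (tens_o D P' W) R" using D.comp_hom h2 Eh by blast
    have tmh: "tm (tens_m D (idm D P') b1) = tm (tens_m D (idm D P') b2)"
      using tm_tens[OF D.id_hom[OF P'] b1] tm_tens[OF D.id_hom[OF P'] b2] tmb by simp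
    have "cmp D (tens_m D (idm D P') b1) E = cmp D (tens_m D (idm D P') b2) E"
    proof (rule RI[OF pf W R r1 r2])
      show "tm (cmp D (tens_m D (idm D P') b1) E) = tm (cmp D (tens_m D (idm D P') b2) E)"
        using tm_cmp[OF h1 Eh] tm_cmp[OF h2 Eh] tmh by simp
      show "cmp D (tens_m D k (idm D W)) (cmp D (tens_m D (idm D P') b1) E) =
            cmp D (tens_m D k (idm D W)) (cmp D (tens_m D (idm D P') b2) E)"
        using key[OF b1 W] key[OF b2 W] eqb by simp
    qed
    then have eq2: "cmp D (cmp D (tens_m D (idm D P') b1) (evL D P' R')) l1 = cmp D (cmp D (tens_m D (idm D P') b2) (evL D P' R')) l1"
      unfolding E_def using D.assoc[OF h1 ev' l1] D.assoc[OF h2 ev' l1] by simp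
    have u1: "cmp D (tens_m D (idm D P') b1) (evL D P' R') \<in> Hom D (tens_o D P' W) R'" using D.comp_hom h1 ev' by blast
    have u2: "cmp D (tens_m D (idm D P') b2) (evL D P' R') \<in> Hom D (tens_o D P' W) R'" using D.comp_hom h2 ev' by blast
    have "cmp D (tens_m D (idm D P') b1) (evL D P' R') = cmp D (tens_m D (idm D P') b2) (evL D P' R')"
    proof (rule pb_inj[OF pb1 D.tens_obj[OF P' W] _ u1 u2 refl _ eq2])
      show "tm (cmp D (tens_m D (idm D P') b1) (evL D P' R')) \<in> Hom T (to (tens_o D P' W)) C'"
        using tm_hom[OF u1] toR' by simp
      show "tm (cmp D (tens_m D (idm D P') b2) (evL D P' R')) = tm (cmp D (tens_m D (idm D P') b1) (evL D P' R'))"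
        using tm_cmp[OF h1 ev'] tm_cmp[OF h2 ev'] tmh by simp
    qed
    then show ?thesis using D.curryL_uniq[OF P' R'] b1 b2 unfolding S'_def by blast
  qed
  define \<gamma> where "\<gamma> = cmp D (tens_m D (idm D P) l2) (evL D P R)"
  have gh: "\<gamma> \<in> Hom D (tens_o D P S) R" unfolding \<gamma>_def
    using D.comp_hom D.tens_hom[OF D.id_hom[OF P] l2] D.evL_hom[OF P R] by blast
  have e: "cmp T (evL T A' C') d \<in> Hom T (tens_o T A' (to S)) (to R)" using T.comp_hom evLT d toS toR by simp
  have "tm \<gamma> = cmp T (tens_m T c (idm T (to S))) (cmp T (evL T A' C') d)"
    unfolding \<gamma>_def using tm_uncL[OF l2 P R] tml2 toP toR mp2 toS by simp
  then obtain g' where g': "g' \<in> Hom D (tens_o D P' S) R" "tm g' = cmp T (evL T A' C') d"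
     "cmp D (tens_m D k (idm D S)) g' = \<gamma>"
    using RE[OF pf S R gh e] by auto
  have e0: "evL T A' C' \<in> Hom T (to (tens_o D P' S)) C'" using evLT to_tens[OF P' S] toP' toS by simp
  obtain g'' where g'': "g'' \<in> Hom D (tens_o D P' S) R'" "tm g'' = evL T A' C'" "cmp D g'' l1 = g'"
    using pb_surj[OF pb1 D.tens_obj[OF P' S] e0 g'(1) g'(2)] by auto
  obtain f where f: "f \<in> Hom D S S'" "cmp D (tens_m D (idm D P') f) (evL D P' R') = g''"
    using D.curryL_ex[OF P' R' g''(1)] unfolding S'_def by blast
  have tmf: "tm f = idm T (ldiv T A' C')"
  proof (rule tm_curryL_eq[OF f(1)[unfolded S'_def] P' R'])
    show "idm T (ldiv T A' C') \<in> Hom T (to S) (ldiv T (to P') (to R'))" using T.id_hom[OF LAo] toS toP' toR' by simp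
    show "cmp T (tens_m T (idm T (to P')) (idm T (ldiv T A' C'))) (evL T (to P') (to R')) =
      tm (cmp D (tens_m D (idm D P') f) (evL D P' R'))"
      using f(2) g''(2) toP' toR' T.tens_id[OF A'o LAo] T.idl[OF evLT] by simp
  qed
  have fS: "tens_m D (idm D P') f \<in> Hom D (tens_o D P' S) (tens_o D P' S')" using D.tens_hom[OF D.id_hom[OF P'] f(1)] .
  have flam: "cmp D f lam = l2"
  proof (rule D.curryL_uniq[OF P R])
    show "cmp D f lam \<in> Hom D S (ldiv D P R)" using D.comp_hom f(1) lam(1) by blast
    show "l2 \<in> Hom D S (ldiv D P R)" using l2 .
    have "cmp D (tens_m D (idm D P') f) E = g'"
      unfolding E_def using D.assoc[OF fS ev' l1, symmetric] f(2) g''(3) by simp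
    then show "cmp D (tens_m D (idm D P) (cmp D f lam)) (evL D P R) = cmp D (tens_m D (idm D P) l2) (evL D P R)"
      using key[OF f(1) S] g'(3) unfolding \<gamma>_def by simp
  qed
  have idL: "idm T (ldiv T A' C') \<in> Hom T (to S') (ldiv T A' C')" using T.id_hom[OF LAo] toS' by simp
  have "tm lam = cmp T (idm T (ldiv T A' C')) m" using tmlam T.idl[OF mh] by simp
  then obtain g where g: "g \<in> Hom D S' S" "tm g = idm T (ldiv T A' C')" "cmp D g l2 = lam"
    using pb_surj[OF pb2 S'o idL lam(1)] m_def by auto
  have fg: "cmp D f g = idm D S"
  proof (rule pb_inj[OF pb2 S])
    show "idm T (ldiv T A' C') \<in> Hom T (to S) (ldiv T A' C')" using T.id_hom[OF LAo] toS by simp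
    show "cmp D f g \<in> Hom D S S" using D.comp_hom f(1) g(1) by blast
    show "idm D S \<in> Hom D S S" using D.id_hom[OF S] .
    show "tm (cmp D f g) = idm T (ldiv T A' C')" using tm_cmp[OF f(1) g(1)] tmf g(2) T.idl[OF T.id_hom[OF LAo]] by simp
    show "tm (idm D S) = idm T (ldiv T A' C')" using tm_id[OF S] toS by simp
    show "cmp D (cmp D f g) l2 = cmp D (idm D S) l2"
      using D.assoc[OF f(1) g(1) l2] g(3) flam D.idl[OF l2] by simp
  qed
  have gf: "cmp D g f = idm D S'"
  proof (rule lamInj[OF S'o])
    show "cmp D g f \<in> Hom D S' S'" using D.comp_hom f(1) g(1) by blast
    show "idm D S' \<in> Hom D S' S'" using D.id_hom[OF S'o] .
    show "tm (cmp D g f) = tm (idm D S')" using tm_cmp[OF g(1) f(1)] tmf g(2) T.idl[OF T.id_hom[OF LAo]] tm_id[OF S'o] toS' by simp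
    show "cmp D (cmp D g f) lam = cmp D (idm D S') lam"
      using D.assoc[OF g(1) f(1) lam(1)] flam g(3) D.idl[OF lam(1)] by simp
  qed
  show ?thesis unfolding vert_iso_def refines_def is_iso_def
    using S toS S'o toS' g f gf fg unfolding S'_def by blast
qed

end

context crs begin

lemma partC:
  assumes pf: "is_pushforward D T to tm B B' c Q Q' k"
    and pb1: "is_pullback D T to tm C' Cc d R R' l1"
    and pb2: "is_pullback D T to tm (rdiv T C' B') (rdiv T Cc B) (rdiv_m T B B' C' Cc d c) (rdiv D R Q) S l2"
  shows "vert_iso D T to tm (rdiv T C' B') (rdiv D R' Q') S"
proof -
  note b = pf_basic[OF pf] and p1 = pb_basic[OF pb1] and p2 = pb_basic[OF pb2]
  define m where "m = rdiv_m T B B' C' Cc d c"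
  have c: "c \<in> Hom T B B'" and d: "d \<in> Hom T C' Cc" using b p1 by auto
  have mh: "m \<in> Hom T (rdiv T C' B') (rdiv T Cc B)" and
    mp: "cmp T (tens_m T m (idm T B)) (evR T Cc B) = cmp T (cmp T (tens_m T (idm T (rdiv T C' B')) c) (evR T C' B')) d"
    using T.rdiv_m_prop[OF c d] unfolding m_def by auto
  have Bo: "B \<in> Obj T" and B'o: "B' \<in> Obj T" and C'o: "C' \<in> Obj T" and Cco: "Cc \<in> Obj T" using c d T.objs by auto
  have LAo: "rdiv T C' B' \<in> Obj T" using T.rdiv_obj[OF B'o C'o] .
  have Q: "Q \<in> Obj D" and Q': "Q' \<in> Obj D" and R: "R \<in> Obj D" and R': "R' \<in> Obj D" and S: "S \<in> Obj D"
    using b p1 p2 by auto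
  have k: "k \<in> Hom D Q Q'" and l1: "l1 \<in> Hom D R' R" and l2: "l2 \<in> Hom D S (rdiv D R Q)" using b p1 p2 by auto
  have tmk: "tm k = c" and tml1: "tm l1 = d" and tml2: "tm l2 = m" using b p1 p2 m_def by auto
  have toQ: "to Q = B" and toQ': "to Q' = B'" and toR: "to R = Cc" and toR': "to R' = C'" and toS: "to S = rdiv T C' B'"
    using b p1 p2 by auto
  define S' where "S' = rdiv D R' Q'"
  have S'o: "S' \<in> Obj D" unfolding S'_def using D.rdiv_obj[OF Q' R'] .
  have toS': "to S' = rdiv T C' B'" unfolding S'_def using to_rdiv[OF Q' R'] toQ' toR' by simp
  have ev': "evR D R' Q' \<in> Hom D (tens_o D S' Q') R'" unfolding S'_def using D.evR_hom[OF Q' R'] .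
  have tmev': "tm (evR D R' Q') = evR T C' B'" using tm_evR[OF Q' R'] toQ' toR' by simp
  define E where "E = cmp D (evR D R' Q') l1"
  have Eh: "E \<in> Hom D (tens_o D S' Q') R" unfolding E_def using D.comp_hom ev' l1 by blast
  have tmE: "tm E = cmp T (evR T C' B') d" unfolding E_def using tm_cmp[OF ev' l1] tmev' tml1 by simp
  define \<nu> where "\<nu> = cmp D (tens_m D (idm D S') k) E"
  have kS': "tens_m D (idm D S') k \<in> Hom D (tens_o D S' Q) (tens_o D S' Q')" using D.tens_hom[OF D.id_hom[OF S'o] k] .
  have nuh: "\<nu> \<in> Hom D (tens_o D S' Q) R" unfolding \<nu>_def using D.comp_hom kS' Eh by blast
  have tmnu: "tm \<nu> = cmp T (tens_m T (idm T (rdiv T C' B')) c) (cmp T (evR T C' B') d)"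
    unfolding \<nu>_def using tm_cmp[OF kS' Eh] tm_tens[OF D.id_hom[OF S'o] k] tm_id[OF S'o] toS' tmk tmE by simp
  have evRT: "evR T C' B' \<in> Hom T (tens_o T (rdiv T C' B') B') C'" using T.evR_hom[OF B'o C'o] .
  have cid: "tens_m T (idm T (rdiv T C' B')) c \<in> Hom T (tens_o T (rdiv T C' B') B) (tens_o T (rdiv T C' B') B')"
    using T.tens_hom[OF T.id_hom[OF LAo] c] .
  have mp2: "cmp T (tens_m T m (idm T B)) (evR T Cc B) = cmp T (tens_m T (idm T (rdiv T C' B')) c) (cmp T (evR T C' B') d)"
    using mp T.assoc[OF cid evRT d] by simp
  obtain lam where lam: "lam \<in> Hom D S' (rdiv D R Q)" "cmp D (tens_m D lam (idm D Q)) (evR D R Q) = \<nu>"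
    using D.curryR_ex[OF Q R nuh] by blast
  have tmlam: "tm lam = m"
  proof (rule tm_curryR_eq[OF lam(1) Q R])
    show "m \<in> Hom T (to S') (rdiv T (to R) (to Q))" using mh toS' toQ toR by simp
    show "cmp T (tens_m T m (idm T (to Q))) (evR T (to R) (to Q)) = tm (cmp D (tens_m D lam (idm D Q)) (evR D R Q))"
      using lam(2) tmnu mp2 toQ toR by simp
  qed
  have key: "cmp D (tens_m D (cmp D \<beta> lam) (idm D Q)) (evR D R Q) =
      cmp D (tens_m D (idm D W) k) (cmp D (tens_m D \<beta> (idm D Q')) E)"
    if \<beta>: "\<beta> \<in> Hom D W S'" and W: "W \<in> Obj D" for \<beta> W
  proof -
    have h1: "tens_m D \<beta> (idm D Q) \<in> Hom D (tens_o D W Q) (tens_o D S' Q)" using D.tens_hom[OF \<beta> D.id_hom[OF Q]] .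
    have h2: "tens_m D (idm D W) k \<in> Hom D (tens_o D W Q) (tens_o D W Q')" using D.tens_hom[OF D.id_hom[OF W] k] .
    have h3: "tens_m D \<beta> (idm D Q') \<in> Hom D (tens_o D W Q') (tens_o D S' Q')" using D.tens_hom[OF \<beta> D.id_hom[OF Q']] .
    have "cmp D (tens_m D (cmp D \<beta> lam) (idm D Q)) (evR D R Q) = cmp D (tens_m D \<beta> (idm D Q)) \<nu>"
      using D.uncR_pre[OF \<beta> lam(1) Q R] lam(2) by simp
    also have "\<dots> = cmp D (cmp D (tens_m D \<beta> (idm D Q)) (tens_m D (idm D S') k)) E"
      unfolding \<nu>_def using D.assoc[OF h1 kS' Eh] by simp
    also have "\<dots> = cmp D (tens_m D \<beta> k) E" using D.split1[OF \<beta> k] by simp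
    also have "\<dots> = cmp D (cmp D (tens_m D (idm D W) k) (tens_m D \<beta> (idm D Q'))) E" using D.split2[OF \<beta> k] by simp
    also have "\<dots> = cmp D (tens_m D (idm D W) k) (cmp D (tens_m D \<beta> (idm D Q')) E)"
      using D.assoc[OF h2 h3 Eh] .
    finally show ?thesis .
  qed
  have lamInj: "b1 = b2" if W: "W \<in> Obj D" and b1: "b1 \<in> Hom D W S'" and b2: "b2 \<in> Hom D W S'"
    and tmb: "tm b1 = tm b2" and eqb: "cmp D b1 lam = cmp D b2 lam" for W b1 b2
  proof -
    have h1: "tens_m D b1 (idm D Q') \<in> Hom D (tens_o D W Q') (tens_o D S' Q')" using D.tens_hom[OF b1 D.id_hom[OF Q']] .
    have h2: "tens_m D b2 (idm D Q') \<in> Hom D (tens_o D W Q') (tens_o D S' Q')" using D.tens_hom[OF b2 D.id_hom[OF Q']] .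
    have r1: "cmp D (tens_m D b1 (idm D Q')) E \<in> Hom D (tens_o D W Q') R" using D.comp_hom h1 Eh by blast
    have r2: "cmp D (tens_m D b2 (idm D Q')) E \<in> Hom D (tens_o D W Q') R" using D.comp_hom h2 Eh by blast
    have tmh: "tm (tens_m D b1 (idm D Q')) = tm (tens_m D b2 (idm D Q'))"
      using tm_tens[OF b1 D.id_hom[OF Q']] tm_tens[OF b2 D.id_hom[OF Q']] tmb by simp
    have "cmp D (tens_m D b1 (idm D Q')) E = cmp D (tens_m D b2 (idm D Q')) E"
    proof (rule LI[OF pf W R r1 r2])
      show "tm (cmp D (tens_m D b1 (idm D Q')) E) = tm (cmp D (tens_m D b2 (idm D Q')) E)"
        using tm_cmp[OF h1 Eh] tm_cmp[OF h2 Eh] tmh by simp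
      show "cmp D (tens_m D (idm D W) k) (cmp D (tens_m D b1 (idm D Q')) E) =
            cmp D (tens_m D (idm D W) k) (cmp D (tens_m D b2 (idm D Q')) E)"
        using key[OF b1 W] key[OF b2 W] eqb by simp
    qed
    then have eq2: "cmp D (cmp D (tens_m D b1 (idm D Q')) (evR D R' Q')) l1 = cmp D (cmp D (tens_m D b2 (idm D Q')) (evR D R' Q')) l1"
      unfolding E_def using D.assoc[OF h1 ev' l1] D.assoc[OF h2 ev' l1] by simp
    have u1: "cmp D (tens_m D b1 (idm D Q')) (evR D R' Q') \<in> Hom D (tens_o D W Q') R'" using D.comp_hom h1 ev' by blast
    have u2: "cmp D (tens_m D b2 (idm D Q')) (evR D R' Q') \<in> Hom D (tens_o D W Q') R'" using D.comp_hom h2 ev' by blast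
    have "cmp D (tens_m D b1 (idm D Q')) (evR D R' Q') = cmp D (tens_m D b2 (idm D Q')) (evR D R' Q')"
    proof (rule pb_inj[OF pb1 D.tens_obj[OF W Q'] _ u1 u2 refl _ eq2])
      show "tm (cmp D (tens_m D b1 (idm D Q')) (evR D R' Q')) \<in> Hom T (to (tens_o D W Q')) C'"
        using tm_hom[OF u1] toR' by simp
      show "tm (cmp D (tens_m D b2 (idm D Q')) (evR D R' Q')) = tm (cmp D (tens_m D b1 (idm D Q')) (evR D R' Q'))"
        using tm_cmp[OF h1 ev'] tm_cmp[OF h2 ev'] tmh by simp
    qed
    then show ?thesis using D.curryR_uniq[OF Q' R'] b1 b2 unfolding S'_def by blast
  qed
  define \<gamma> where "\<gamma> = cmp D (tens_m D l2 (idm D Q)) (evR D R Q)"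
  have gh: "\<gamma> \<in> Hom D (tens_o D S Q) R" unfolding \<gamma>_def
    using D.comp_hom D.tens_hom[OF l2 D.id_hom[OF Q]] D.evR_hom[OF Q R] by blast
  have e: "cmp T (evR T C' B') d \<in> Hom T (tens_o T (to S) B') (to R)" using T.comp_hom evRT d toS toR by simp
  have "tm \<gamma> = cmp T (tens_m T (idm T (to S)) c) (cmp T (evR T C' B') d)"
    unfolding \<gamma>_def using tm_uncR[OF l2 Q R] tml2 toQ toR mp2 toS by simp
  then obtain g' where g': "g' \<in> Hom D (tens_o D S Q') R" "tm g' = cmp T (evR T C' B') d"
     "cmp D (tens_m D (idm D S) k) g' = \<gamma>"
    using LE[OF pf S R gh e] by auto
  have e0: "evR T C' B' \<in> Hom T (to (tens_o D S Q')) C'" using evRT to_tens[OF S Q'] toQ' toS by simp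
  obtain g'' where g'': "g'' \<in> Hom D (tens_o D S Q') R'" "tm g'' = evR T C' B'" "cmp D g'' l1 = g'"
    using pb_surj[OF pb1 D.tens_obj[OF S Q'] e0 g'(1) g'(2)] by auto
  obtain f where f: "f \<in> Hom D S S'" "cmp D (tens_m D f (idm D Q')) (evR D R' Q') = g''"
    using D.curryR_ex[OF Q' R' g''(1)] unfolding S'_def by blast
  have tmf: "tm f = idm T (rdiv T C' B')"
  proof (rule tm_curryR_eq[OF f(1)[unfolded S'_def] Q' R'])
    show "idm T (rdiv T C' B') \<in> Hom T (to S) (rdiv T (to R') (to Q'))" using T.id_hom[OF LAo] toS toQ' toR' by simp
    show "cmp T (tens_m T (idm T (rdiv T C' B')) (idm T (to Q'))) (evR T (to R') (to Q')) =
      tm (cmp D (tens_m D f (idm D Q')) (evR D R' Q'))"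
      using f(2) g''(2) toQ' toR' T.tens_id[OF LAo B'o] T.idl[OF evRT] by simp
  qed
  have fS: "tens_m D f (idm D Q') \<in> Hom D (tens_o D S Q') (tens_o D S' Q')" using D.tens_hom[OF f(1) D.id_hom[OF Q']] .
  have flam: "cmp D f lam = l2"
  proof (rule D.curryR_uniq[OF Q R])
    show "cmp D f lam \<in> Hom D S (rdiv D R Q)" using D.comp_hom f(1) lam(1) by blast
    show "l2 \<in> Hom D S (rdiv D R Q)" using l2 .
    have "cmp D (tens_m D f (idm D Q')) E = g'"
      unfolding E_def using D.assoc[OF fS ev' l1, symmetric] f(2) g''(3) by simp
    then show "cmp D (tens_m D (cmp D f lam) (idm D Q)) (evR D R Q) = cmp D (tens_m D l2 (idm D Q)) (evR D R Q)"
      using key[OF f(1) S] g'(3) unfolding \<gamma>_def by simp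
  qed
  have idL: "idm T (rdiv T C' B') \<in> Hom T (to S') (rdiv T C' B')" using T.id_hom[OF LAo] toS' by simp
  have "tm lam = cmp T (idm T (rdiv T C' B')) m" using tmlam T.idl[OF mh] by simp
  then obtain g where g: "g \<in> Hom D S' S" "tm g = idm T (rdiv T C' B')" "cmp D g l2 = lam"
    using pb_surj[OF pb2 S'o idL lam(1)] m_def by auto
  have fg: "cmp D f g = idm D S"
  proof (rule pb_inj[OF pb2 S])
    show "idm T (rdiv T C' B') \<in> Hom T (to S) (rdiv T C' B')" using T.id_hom[OF LAo] toS by simp
    show "cmp D f g \<in> Hom D S S" using D.comp_hom f(1) g(1) by blast
    show "idm D S \<in> Hom D S S" using D.id_hom[OF S] .
    show "tm (cmp D f g) = idm T (rdiv T C' B')" using tm_cmp[OF f(1) g(1)] tmf g(2) T.idl[OF T.id_hom[OF LAo]] by simp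
    show "tm (idm D S) = idm T (rdiv T C' B')" using tm_id[OF S] toS by simp
    show "cmp D (cmp D f g) l2 = cmp D (idm D S) l2"
      using D.assoc[OF f(1) g(1) l2] g(3) flam D.idl[OF l2] by simp
  qed
  have gf: "cmp D g f = idm D S'"
  proof (rule lamInj[OF S'o])
    show "cmp D g f \<in> Hom D S' S'" using D.comp_hom f(1) g(1) by blast
    show "idm D S' \<in> Hom D S' S'" using D.id_hom[OF S'o] .
    show "tm (cmp D g f) = tm (idm D S')" using tm_cmp[OF g(1) f(1)] tmf g(2) T.idl[OF T.id_hom[OF LAo]] tm_id[OF S'o] toS' by simp
    show "cmp D (cmp D g f) lam = cmp D (idm D S') lam"
      using D.assoc[OF g(1) f(1) lam(1)] flam g(3) D.idl[OF lam(1)] by simp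
  qed
  show ?thesis unfolding vert_iso_def refines_def is_iso_def
    using S toS S'o toS' g f gf fg unfolding S'_def by blast
qed

end

theorem proposition2p4:
  fixes D :: "('p, 'q) mcat" and T :: "('a, 'c) mcat"
    and to :: "'p \<Rightarrow> 'a" and tm :: "'q \<Rightarrow> 'c"
  assumes "closed_monoidal_refinement_system D T to tm"
  shows
   "(\<forall>A A' B B' c d P Q P' Q' S k1 k2 k3.
       is_pushforward D T to tm A A' c P P' k1 \<longrightarrow>
       is_pushforward D T to tm B B' d Q Q' k2 \<longrightarrow>
       is_pushforward D T to tm (tens_o T A B) (tens_o T A' B') (tens_m T c d)
                      (tens_o D P Q) S k3 \<longrightarrow>
       vert_iso D T to tm (tens_o T A' B') S (tens_o D P' Q'))
  \<and> (\<forall>A A' C C' c d P R P' R' S k l1 l2.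
       is_pushforward D T to tm A A' c P P' k \<longrightarrow>
       is_pullback D T to tm C' C d R R' l1 \<longrightarrow>
       is_pullback D T to tm (ldiv T A' C') (ldiv T A C) (ldiv_m T A A' C' C c d)
                   (ldiv D P R) S l2 \<longrightarrow>
       vert_iso D T to tm (ldiv T A' C') (ldiv D P' R') S)
  \<and> (\<forall>B B' C C' c d Q R Q' R' S k l1 l2.
       is_pushforward D T to tm B B' c Q Q' k \<longrightarrow>
       is_pullback D T to tm C' C d R R' l1 \<longrightarrow>
       is_pullback D T to tm (rdiv T C' B') (rdiv T C B) (rdiv_m T B B' C' C d c)
                   (rdiv D R Q) S l2 \<longrightarrow>
       vert_iso D T to tm (rdiv T C' B') (rdiv D R' Q') S)"
  proof -
  interpret crs D T to tm by (rule crs.intro[OF assms])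
  show ?thesis
    apply (intro conjI allI impI)
      apply (erule (2) partA)
     apply (erule (2) partB)
    apply (erule (2) partC)
    done
qed

end
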